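(* Let $0<\varpi<2$ and $0\le\beta_s\le1$. Let $X$ be a binary random variable with distribution $(p,1-p)$, $p\in[0,1]$, and let $Y$ be the binary output of the channel with transition matrix $$p(y\mid x)=\begin{pmatrix}1-\beta_s&\beta_s\\ \beta_s&1-\beta_s\end{pmatrix}.$$ Then the message importance loss capacity is $$C(\varpi,\beta_s)=\max_{p\in[0,1]}\big\{L(\varpi,X)-L(\varpi,X\mid Y)\big\}=e^{\varpi/2}-\big(\beta_s e^{\varpi(1-\beta_s)}+(1-\beta_s)e^{\varpi\beta_s}\big),$$ the maximum being attained at the uniform input $p=1/2$.
   Context: For a discrete random variable $X$ with distribution $\{p(x_1),\dots,p(x_n)\}$ the message importance measure (MIM) is $L(\varpi,X)=\sum_i p(x_i)e^{\varpi(1-p(x_i))}$. For a pair $(X,Y)$ with joint law $p(x_i)p(y_j\mid x_i)$, $p(y_j)=\sum_i p(x_i)p(y_j\mid x_i)$ and $p(x_i\mid y_j)=p(x_i)p(y_j\mid x_i)/p(y_j)$, the conditional message importance measure (CMIM) is $L(\varpi,X\mid Y)=\sum_{j:\,p(y_j)>0} p(y_j)\sum_i p(x_i\mid y_j)e^{\varpi(1-p(x_i\mid y_j))}$. For a fixed transition matrix $p(y\mid x)$, the message importance loss capacity (MILC) is $C=\max_{p(x)}\{L(\varpi,X)-L(\varpi,X\mid Y)\}$, the maximum over input distributions. *)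

theory Defs
  imports "HOL-Analysis.Analysis"
begin

definition MIM :: "real \<Rightarrow> ('a::finite \<Rightarrow> real) \<Rightarrow> real" where
  "MIM w px = (\<Sum>x\<in>UNIV. px x * exp (w * (1 - px x)))"

definition out_dist :: "('a::finite \<Rightarrow> real) \<Rightarrow> ('a \<Rightarrow> 'b \<Rightarrow> real) \<Rightarrow> 'b \<Rightarrow> real" where
  "out_dist px W y = (\<Sum>x\<in>UNIV. px x * W x y)"

definition post :: "('a::finite \<Rightarrow> real) \<Rightarrow> ('a \<Rightarrow> 'b \<Rightarrow> real) \<Rightarrow> 'b \<Rightarrow> 'a \<Rightarrow> real" where
  "post px W y x = px x * W x y / out_dist px W y"

definition CMIM :: "real \<Rightarrow> ('a::finite \<Rightarrow> real) \<Rightarrow> ('a \<Rightarrow> 'b::finite \<Rightarrow> real) \<Rightarrow> real" where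
  "CMIM w px W = (\<Sum>y\<in>{y. out_dist px W y > 0}. out_dist px W y *
      (\<Sum>x\<in>UNIV. post px W y x * exp (w * (1 - post px W y x))))"

text \<open>Binary input distribution (p, 1-p): True is x_1, False is x_2.\<close>
definition bin_dist :: "real \<Rightarrow> bool \<Rightarrow> real" where
  "bin_dist p x = (if x then p else 1 - p)"

definition bsc :: "real \<Rightarrow> bool \<Rightarrow> bool \<Rightarrow> real" where
  "bsc b x y = (if x = y then 1 - b else b)"

definition mil_bsc :: "real \<Rightarrow> real \<Rightarrow> real \<Rightarrow> real" where
  "mil_bsc w b p = MIM w (bin_dist p) - CMIM w (bin_dist p) (bsc b)"

end

theory Submission
  imports Defs
begin

lemma tanh_sums:
  fixes a b :: real
  assumes a01: "0 \<le> a" "a < 1" and b01: "0 \<le> b" "b < 1"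
  shows "(a+b)/(1+a*b) + (a-b)/(1-a*b) \<le> 2*a" "(a+b)/(1+a*b) - (a-b)/(1-a*b) \<le> 2*b"
proof -
  have ab: "a*b \<le> a" "a*b \<le> b" "0 \<le> a*b" using a01 b01 by (auto simp: mult_left_le_one_le mult_left_le)
  have p: "1+a*b > 0" "1-a*b > 0" using ab a01 by linarith+
  have e1: "(a+b)/(1+a*b) + (a-b)/(1-a*b) = 2*a*(1-b*b)/((1+a*b)*(1-a*b))"
    using p by (simp add: field_simps, (simp add: algebra_simps)?)
  have e2: "(a+b)/(1+a*b) - (a-b)/(1-a*b) = 2*b*(1-a*a)/((1+a*b)*(1-a*b))"
    using p by (simp add: field_simps, (simp add: algebra_simps)?)
  have pp: "(1+a*b)*(1-a*b) > 0" using p by simp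
  have "2*a*(1-b*b) \<le> 2*a*((1+a*b)*(1-a*b))"
  proof -
    have "(a*a)*(b*b) \<le> 1*(b*b)" using a01 b01 by (intro mult_right_mono) (auto intro: mult_le_one)
    then show ?thesis using a01 by (intro mult_left_mono) (auto simp: algebra_simps)
  qed
  then show "(a+b)/(1+a*b) + (a-b)/(1-a*b) \<le> 2*a" unfolding e1 using pp by (simp add: divide_le_eq)
  have "2*b*(1-a*a) \<le> 2*b*((1+a*b)*(1-a*b))"
  proof -
    have "(a*a)*(b*b) \<le> (a*a)*1" using a01 b01 by (intro mult_left_mono) (auto intro: mult_le_one)
    then show ?thesis using b01 by (intro mult_left_mono) (auto simp: algebra_simps)
  qed
  then show "(a+b)/(1+a*b) - (a-b)/(1-a*b) \<le> 2*b" unfolding e2 using pp by (simp add: divide_le_eq)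
qed

lemma tanh_le_self: assumes "(x::real) \<ge> 0" shows "tanh x \<le> x"
proof -
  have "(\<lambda>y. y - tanh y) 0 \<le> (\<lambda>y. y - tanh y) x"
  proof (rule DERIV_nonneg_imp_nondecreasing[OF assms])
    fix y :: real assume "0 \<le> y" "y \<le> x"
    have "((\<lambda>y. y - tanh y) has_real_derivative 1 - (1 - tanh y ^ 2)) (at y)"
      by (auto intro!: derivative_eq_intros)
    then show "\<exists>d. ((\<lambda>y. y - tanh y) has_real_derivative d) (at y) \<and> 0 \<le> d" by force
  qed
  then show ?thesis by simp
qed

lemma E_nonneg_pos:
  fixes A B c :: real
  assumes c: "0 \<le> c" "c \<le> 1" and AB: "0 \<le> A" "0 \<le> B"
  shows "cosh A * cosh B - cosh A * cosh (B - c * tanh B) - cosh B * cosh (A - c * tanh A)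
          + (cosh (A + B - c * tanh (A+B)) + cosh (A - B - c * tanh (A-B))) / 2 \<ge> 0"
proof -
  define a where "a = tanh A"
  define b where "b = tanh B"
  have a01: "0 \<le> a" "a < 1" using AB by (auto simp: a_def tanh_real_lt_1)
  have b01: "0 \<le> b" "b < 1" using AB by (auto simp: b_def tanh_real_lt_1)
  have tp: "tanh (A+B) = (a+b)/(1+a*b)" unfolding a_def b_def by (rule tanh_add) auto
  have tm: "tanh (A-B) = (a-b)/(1-a*b)"
  proof -
    have "tanh (A + -B) = (tanh A + tanh (-B))/(1 + tanh A * tanh (-B))" by (rule tanh_add) auto
    then show ?thesis by (simp add: a_def b_def)
  qed
  have le1: "tanh (A+B) + tanh (A-B) \<le> 2*a" unfolding tp tm by (rule tanh_sums(1)[OF a01 b01])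
  have le2: "tanh (A+B) - tanh (A-B) \<le> 2*b" unfolding tp tm by (rule tanh_sums(2)[OF a01 b01])
  define tA where "tA = A - c * a"
  define tB where "tB = B - c * b"
  define M where "M = ((A + B - c * tanh (A+B)) + (A - B - c * tanh (A-B)))/2"
  define N where "N = ((A + B - c * tanh (A+B)) - (A - B - c * tanh (A-B)))/2"
  have "c * a \<le> a" using c a01 by (simp add: mult_left_le_one_le)
  then have thA: "0 \<le> tA" "tA \<le> A" using tanh_le_self[OF AB(1)] c a01
    unfolding tA_def a_def[symmetric] by auto
  have "c * b \<le> b" using c b01 by (simp add: mult_left_le_one_le)
  then have thB: "0 \<le> tB" "tB \<le> B" using tanh_le_self[OF AB(2)] c b01
    unfolding tB_def b_def[symmetric] by auto
  have "c * (tanh (A+B) + tanh (A-B)) \<le> c * (2*a)" using le1 c(1) by (rule mult_left_mono)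
  then have MA: "tA \<le> M" unfolding M_def tA_def by (simp add: algebra_simps)
  have "c * (tanh (A+B) - tanh (A-B)) \<le> c * (2*b)" using le2 c(1) by (rule mult_left_mono)
  then have NB: "tB \<le> N" unfolding N_def tB_def by (simp add: algebra_simps)
  have sum: "cosh (A + B - c * tanh (A+B)) + cosh (A - B - c * tanh (A-B)) = 2 * cosh M * cosh N"
  proof -
    have "A + B - c * tanh (A+B) = M + N" "A - B - c * tanh (A-B) = M - N" unfolding M_def N_def by (simp_all add: field_simps)
    then show ?thesis by (simp add: cosh_add cosh_diff)
  qed
  have cM: "cosh tA \<le> cosh M" using thA MA by (subst cosh_real_nonneg_le_iff) auto
  have cN: "cosh tB \<le> cosh N" using thB NB by (subst cosh_real_nonneg_le_iff) auto
  have "cosh tA * cosh tB \<le> cosh M * cosh N"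
    using cM cN by (intro mult_mono) (auto intro: order_trans[OF zero_le_one cosh_real_ge_1])
  moreover have cA: "cosh tA \<le> cosh A" using thA by (subst cosh_real_nonneg_le_iff) auto
  moreover have cB: "cosh tB \<le> cosh B" using thB by (subst cosh_real_nonneg_le_iff) auto
  moreover have "0 \<le> (cosh A - cosh tA) * (cosh B - cosh tB)" using cA cB by simp
  ultimately show ?thesis unfolding sum tA_def tB_def a_def b_def by (simp add: algebra_simps)
qed


lemma E_nonneg:
  fixes A B c :: real
  assumes c: "0 \<le> c" "c \<le> 1"
  shows "cosh A * cosh B - cosh A * cosh (B - c * tanh B) - cosh B * cosh (A - c * tanh A)
          + (cosh (A + B - c * tanh (A+B)) + cosh (A - B - c * tanh (A-B))) / 2 \<ge> 0"
proof -
  have ev: "cosh (x - c * tanh x) = cosh (-x - c * tanh (-x))" for x :: real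
  proof -
    have "-x - c * tanh (-x) = -(x - c * tanh x)" by simp
    then show ?thesis by (simp only: cosh_minus)
  qed
  have sw: "cosh (A - B - c * tanh (A-B)) = cosh (B - A - c * tanh (B-A))"
    using ev[of "A-B"] by simp
  have ev2: "cosh (-A + -B - c * tanh (-A + -B)) = cosh (A + B - c * tanh (A+B))"
    using ev[of "A+B"] by simp
  have ev3: "cosh (-A - B - c * tanh (-A - B)) = cosh (A + B - c * tanh (A+B))"
    using ev[of "A+B"] by simp
  have ev4: "cosh (A + -B - c * tanh (A + -B)) = cosh (A - B - c * tanh (A-B))" by simp
  have ev5: "cosh (-A + B - c * tanh (-A + B)) = cosh (A - B - c * tanh (A-B))"
    using ev[of "A-B"] by simp
  have ev6: "cosh (-A - -B - c * tanh (-A - -B)) = cosh (A - B - c * tanh (A-B))"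
    using ev[of "A-B"] by simp
  have cA': "cosh (c * tanh A - A) = cosh (A - c * tanh A)" by (metis cosh_minus minus_diff_eq)
  have cB': "cosh (c * tanh B - B) = cosh (B - c * tanh B)" by (metis cosh_minus minus_diff_eq)
  consider "0 \<le> A" "0 \<le> B" | "A < 0" "0 \<le> B" | "0 \<le> A" "B < 0" | "A < 0" "B < 0" by linarith
  then show ?thesis
  proof cases
    case 1 then show ?thesis using E_nonneg_pos[OF c] by blast
  next
    case 2
    have "0 \<le> cosh (-A) * cosh B - cosh (-A) * cosh (B - c * tanh B) - cosh B * cosh (-A - c * tanh (-A))
          + (cosh (-A + B - c * tanh (-A+B)) + cosh (-A - B - c * tanh (-A-B))) / 2"
      using 2 by (intro E_nonneg_pos[OF c]) auto
    then show ?thesis unfolding ev5 ev3 by (simp add: cA' add.commute)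
  next
    case 3
    have "0 \<le> cosh A * cosh (-B) - cosh A * cosh (-B - c * tanh (-B)) - cosh (-B) * cosh (A - c * tanh A)
          + (cosh (A + -B - c * tanh (A + -B)) + cosh (A - -B - c * tanh (A - -B))) / 2"
      using 3 by (intro E_nonneg_pos[OF c]) auto
    then show ?thesis unfolding ev4 by (simp add: cB' add.commute)
  next
    case 4
    have "0 \<le> cosh (-A) * cosh (-B) - cosh (-A) * cosh (-B - c * tanh (-B)) - cosh (-B) * cosh (-A - c * tanh (-A))
          + (cosh (-A + -B - c * tanh (-A + -B)) + cosh (-A - -B - c * tanh (-A - -B))) / 2"
      using 4 by (intro E_nonneg_pos[OF c]) auto
    then show ?thesis unfolding ev2 ev6 by (simp add: cA' cB' add.commute)
  qed
qed


definition sg :: "real \<Rightarrow> real" where "sg A = (1 + tanh A) / 2"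

lemma sg_bounds: "0 < sg A" "sg A < 1"
  unfolding sg_def using tanh_real_lt_1[of A] tanh_real_gt_neg1[of A] by auto

lemma sg_compl: "1 - sg A = sg (-A)"
  unfolding sg_def by (simp add: field_simps)

lemma F_sg:
  "sg A * exp (w * (1 - sg A)) + (1 - sg A) * exp (w * sg A)
     = exp (w/2) * cosh (A - w/2 * tanh A) / cosh A"
proof -
  define y where "y = w/2 * tanh A"
  define t where "t = tanh A"
  have e1: "w * (1 - sg A) = w/2 + - y" unfolding y_def sg_def by (simp add: field_simps)
  have e2: "w * sg A = w/2 + y" unfolding y_def sg_def by (simp add: field_simps)
  have ey: "exp y = cosh y + sinh y" "exp (-y) = cosh y - sinh y"
    by (simp_all add: cosh_def sinh_def field_simps)
  have ch: "cosh (A - y) / cosh A = cosh y - t * sinh y"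
    unfolding t_def tanh_def by (simp add: cosh_diff field_simps)
  show ?thesis
    unfolding e1 e2 y_def[symmetric] exp_add ey mult.assoc[of "exp (w/2)"] times_divide_eq_right[symmetric] ch
    unfolding sg_def t_def[symmetric]
    by (simp add: field_simps)
qed

lemma out_sg:
  "sg A * (1 - sg B) + (1 - sg A) * sg B = cosh (A - B) / (2 * cosh A * cosh B)"
  "sg A * (1 - sg B) / (sg A * (1 - sg B) + (1 - sg A) * sg B) = sg (A - B)"
proof -
  define a where "a = tanh A"
  define b where "b = tanh B"
  have a1: "\<bar>a\<bar> < 1" unfolding a_def using tanh_real_lt_1[of A] tanh_real_gt_neg1[of A] by auto
  have b1: "\<bar>b\<bar> < 1" unfolding b_def using tanh_real_lt_1[of B] tanh_real_gt_neg1[of B] by auto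
  have "\<bar>a\<bar>*\<bar>b\<bar> \<le> \<bar>a\<bar>" using b1 by (intro mult_right_le_one_le) auto
  then have "\<bar>a*b\<bar> < 1" using a1 by (simp add: abs_mult)
  then have p: "1 - a*b > 0" by linarith
  have o: "sg A * (1 - sg B) + (1 - sg A) * sg B = (1 - a*b)/2"
    unfolding sg_def a_def b_def by (simp add: field_simps)
  have tm: "tanh (A - B) = (a - b)/(1 - a*b)"
  proof -
    have "tanh (A + -B) = (tanh A + tanh (-B))/(1 + tanh A * tanh (-B))" by (rule tanh_add) auto
    then show ?thesis by (simp add: a_def b_def)
  qed
  show "sg A * (1 - sg B) + (1 - sg A) * sg B = cosh (A - B) / (2 * cosh A * cosh B)"
    unfolding o a_def b_def tanh_def by (simp add: cosh_diff field_simps)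
  show "sg A * (1 - sg B) / (sg A * (1 - sg B) + (1 - sg A) * sg B) = sg (A - B)"
    unfolding o unfolding sg_def tm a_def[symmetric] b_def[symmetric] using p
    by (simp add: field_simps)
qed


lemma cosh_theta_le:
  fixes A c :: real assumes c: "0 \<le> c" "c \<le> 1"
  shows "cosh (A - c * tanh A) \<le> cosh A"
proof -
  have pos: "cosh (X - c * tanh X) \<le> cosh X" if "X \<ge> 0" for X :: real
  proof -
    have "tanh X \<le> X" by (rule tanh_le_self[OF that])
    moreover have "0 \<le> tanh X" using that by simp
    moreover have "c * tanh X \<le> tanh X" using c \<open>0 \<le> tanh X\<close> by (simp add: mult_left_le_one_le)
    moreover have "0 \<le> c * tanh X" using c \<open>0 \<le> tanh X\<close> by simp
    ultimately show ?thesis using that by (subst cosh_real_nonneg_le_iff) auto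
  qed
  show ?thesis
  proof (cases "A \<ge> 0")
    case True then show ?thesis by (rule pos)
  next
    case False
    have "cosh (-A - c * tanh (-A)) \<le> cosh (-A)" using False by (intro pos) auto
    moreover have "-A - c * tanh (-A) = -(A - c * tanh A)" by simp
    ultimately show ?thesis by (metis cosh_minus)
  qed
qed

lemma sg_surj:
  assumes "0 < q" "q < 1" shows "\<exists>A. sg A = q"
proof -
  define x where "x = sqrt (q / (1 - q))"
  have x0: "x > 0" unfolding x_def using assms by simp
  have x2: "x^2 = q / (1 - q)" unfolding x_def using assms by simp
  have "tanh (ln x) = (x^2 - 1)/(x^2 + 1)" by (rule tanh_ln_real[OF x0])
  also have "\<dots> = 2*q - 1" unfolding x2 using assms by (simp add: field_simps)
  finally have "sg (ln x) = q" unfolding sg_def by simp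
  then show ?thesis by blast
qed

definition FF :: "real \<Rightarrow> real \<Rightarrow> real" where
  "FF w q = q * exp (w * (1 - q)) + (1 - q) * exp (w * q)"

lemma FF_le:
  assumes "0 < w" "w \<le> 2" "0 \<le> q" "q \<le> 1" shows "FF w q \<le> exp (w/2)"
proof -
  consider "q = 0" | "q = 1" | "0 < q" "q < 1" using assms by linarith
  then show ?thesis
  proof cases
    case 1 then show ?thesis using assms by (simp add: FF_def)
  next
    case 2 then show ?thesis using assms by (simp add: FF_def)
  next
    case 3
    then obtain A where A: "sg A = q" using sg_surj by blast
    have "FF w q = exp (w/2) * cosh (A - w/2 * tanh A) / cosh A"
      unfolding FF_def A[symmetric] by (rule F_sg)
    also have "\<dots> \<le> exp (w/2) * cosh A / cosh A"
      using cosh_theta_le[of "w/2" A] assms by (intro divide_right_mono mult_left_mono) auto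
    also have "\<dots> = exp (w/2)" by simp
    finally show ?thesis .
  qed
qed

lemma CMIM_ge1:
  fixes px :: "'a::finite \<Rightarrow> real" and W :: "'a \<Rightarrow> 'b::finite \<Rightarrow> real"
  assumes px: "\<And>x. px x \<ge> 0" "sum px UNIV = 1"
      and W: "\<And>x y. W x y \<ge> 0" "\<And>x. (\<Sum>y\<in>UNIV. W x y) = 1" and w: "w \<ge> 0"
  shows "CMIM w px W \<ge> 1"
proof -
  let ?o = "out_dist px W"
  define S where "S = {y. ?o y > 0}"
  have inner: "(\<Sum>x\<in>UNIV. post px W y x * exp (w * (1 - post px W y x))) \<ge> 1" if y: "y \<in> S" for y
  proof -
    have oy: "?o y > 0" using y S_def by simp
    have pn: "post px W y x \<ge> 0" for x unfolding post_def using px W oy by simp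
    have p1: "post px W y x \<le> 1" for x
    proof -
      have "px x * W x y \<le> (\<Sum>x\<in>UNIV. px x * W x y)"
        by (rule member_le_sum) (use px W in auto)
      then show ?thesis unfolding post_def out_dist_def[symmetric] using oy
        by (simp add: divide_le_eq out_dist_def)
    qed
    have "(\<Sum>x\<in>UNIV. post px W y x) \<le> (\<Sum>x\<in>UNIV. post px W y x * exp (w * (1 - post px W y x)))"
    proof (rule sum_mono)
      fix x :: 'a
      have "1 \<le> exp (w * (1 - post px W y x))" using w p1[of x] by simp
      then show "post px W y x \<le> post px W y x * exp (w * (1 - post px W y x))"
        using pn[of x] mult_left_mono[of 1 _ "post px W y x"] by simp
    qed
    moreover have "(\<Sum>x\<in>UNIV. post px W y x) = 1"
      unfolding post_def sum_divide_distrib[symmetric] out_dist_def[symmetric] using oy by simp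
    ultimately show ?thesis by simp
  qed
  have "(\<Sum>y\<in>S. ?o y * 1) \<le> CMIM w px W"
    unfolding CMIM_def S_def[symmetric]
    by (rule sum_mono, rule mult_left_mono) (use inner S_def in auto)
  moreover have "(\<Sum>y\<in>S. ?o y) = (\<Sum>y\<in>UNIV. ?o y)"
  proof (rule sum.mono_neutral_left)
    show "\<forall>i\<in>UNIV - S. ?o i = 0"
    proof
      fix i assume "i \<in> UNIV - S"
      moreover have "?o i \<ge> 0" unfolding out_dist_def using px W by (simp add: sum_nonneg)
      ultimately show "?o i = 0" unfolding S_def by simp
    qed
  qed auto
  moreover have "(\<Sum>y\<in>UNIV. ?o y) = 1"
  proof -
    have "(\<Sum>y\<in>UNIV. ?o y) = (\<Sum>x\<in>UNIV. px x * (\<Sum>y\<in>UNIV. W x y))"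
      unfolding out_dist_def by (subst sum.swap) (simp add: sum_distrib_left)
    also have "\<dots> = 1" using W(2) px(2) by simp
    finally show ?thesis .
  qed
  ultimately show ?thesis by simp
qed


lemma MIM_bin: "MIM w (bin_dist p) = FF w p"
  by (simp add: MIM_def bin_dist_def UNIV_bool FF_def)

lemma out_bin:
  "out_dist (bin_dist p) (bsc b) True = p*(1-b) + (1-p)*b"
  "out_dist (bin_dist p) (bsc b) False = p*b + (1-p)*(1-b)"
  by (simp_all add: out_dist_def bin_dist_def bsc_def UNIV_bool add.commute)

lemma CMIM_bin:
  assumes oT: "p*(1-b) + (1-p)*b > 0" and oF: "p*b + (1-p)*(1-b) > 0"
  shows "CMIM w (bin_dist p) (bsc b)
     = (p*(1-b) + (1-p)*b) * FF w (p*(1-b) / (p*(1-b) + (1-p)*b))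
     + (p*b + (1-p)*(1-b)) * FF w (p*b / (p*b + (1-p)*(1-b)))"
proof -
  define oT' where "oT' = p*(1-b) + (1-p)*b"
  define oF' where "oF' = p*b + (1-p)*(1-b)"
  have S: "{y. out_dist (bin_dist p) (bsc b) y > 0} = UNIV"
  proof -
    have "out_dist (bin_dist p) (bsc b) y > 0" for y using oT oF by (cases y) (simp_all add: out_bin)
    then show ?thesis by auto
  qed
  have pTT: "post (bin_dist p) (bsc b) True True = p*(1-b)/oT'"
    by (simp add: post_def out_bin oT'_def bin_dist_def bsc_def)
  have pTF: "post (bin_dist p) (bsc b) True False = 1 - p*(1-b)/oT'"
    using oT unfolding oT'_def by (simp add: post_def out_bin bin_dist_def bsc_def field_simps)
  have pFT: "post (bin_dist p) (bsc b) False True = p*b/oF'"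
    by (simp add: post_def out_bin oF'_def bin_dist_def bsc_def)
  have pFF: "post (bin_dist p) (bsc b) False False = 1 - p*b/oF'"
    using oF unfolding oF'_def by (simp add: post_def out_bin bin_dist_def bsc_def field_simps)
  have iT: "(\<Sum>x\<in>UNIV. post (bin_dist p) (bsc b) True x * exp (w * (1 - post (bin_dist p) (bsc b) True x)))
     = FF w (p*(1-b)/oT')" by (simp add: UNIV_bool pTT pTF FF_def)
  have iF: "(\<Sum>x\<in>UNIV. post (bin_dist p) (bsc b) False x * exp (w * (1 - post (bin_dist p) (bsc b) False x)))
     = FF w (p*b/oF')" by (simp add: UNIV_bool pFT pFF FF_def)
  have "CMIM w (bin_dist p) (bsc b) = out_dist (bin_dist p) (bsc b) False * FF w (p*b/oF')
      + out_dist (bin_dist p) (bsc b) True * FF w (p*(1-b)/oT')"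
  proof -
    have "CMIM w (bin_dist p) (bsc b) = out_dist (bin_dist p) (bsc b) False *
     (post (bin_dist p) (bsc b) False False * exp (w * (1 - post (bin_dist p) (bsc b) False False)) +
      post (bin_dist p) (bsc b) False True * exp (w * (1 - post (bin_dist p) (bsc b) False True))) +
     out_dist (bin_dist p) (bsc b) True *
     (post (bin_dist p) (bsc b) True False * exp (w * (1 - post (bin_dist p) (bsc b) True False)) +
      post (bin_dist p) (bsc b) True True * exp (w * (1 - post (bin_dist p) (bsc b) True True)))"
      unfolding CMIM_def S by (simp add: UNIV_bool)
    moreover have "post (bin_dist p) (bsc b) False False * exp (w * (1 - post (bin_dist p) (bsc b) False False)) +
      post (bin_dist p) (bsc b) False True * exp (w * (1 - post (bin_dist p) (bsc b) False True)) = FF w (p*b/oF')"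
      using iF by (simp add: UNIV_bool)
    moreover have "post (bin_dist p) (bsc b) True False * exp (w * (1 - post (bin_dist p) (bsc b) True False)) +
      post (bin_dist p) (bsc b) True True * exp (w * (1 - post (bin_dist p) (bsc b) True True)) = FF w (p*(1-b)/oT')"
      using iT by (simp add: UNIV_bool)
    ultimately show ?thesis by simp
  qed
  then show ?thesis unfolding out_bin oT'_def oF'_def by simp
qed

lemma half_val:
  "mil_bsc w b (1/2) = exp (w / 2) - (b * exp (w * (1 - b)) + (1 - b) * exp (w * b))"
proof -
  have "CMIM w (bin_dist (1/2)) (bsc b) = 1/2 * FF w (1 - b) + 1/2 * FF w b"
  proof -
    have e1: "1/2*(1-b) + (1-1/2)*b = (1/2::real)" by (simp add: field_simps)
    have e2: "1/2*b + (1-1/2)*(1-b) = (1/2::real)" by (simp add: field_simps)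
    have e3: "1/2*(1-b) / (1/2::real) = 1 - b" "1/2*b / (1/2::real) = b" by (simp_all add: field_simps)
    show ?thesis using CMIM_bin[of "1/2" b w] unfolding e1 e2 e3 by (simp only:)
  qed
  moreover have "MIM w (bin_dist (1/2)) = exp (w/2)" by (simp add: MIM_bin FF_def)
  ultimately show ?thesis unfolding mil_bsc_def by (simp add: FF_def algebra_simps)
qed


lemma FF_sg: "FF w (sg X) = exp (w/2) * cosh (X - w/2 * tanh X) / cosh X"
  unfolding FF_def by (rule F_sg)

lemma interior:
  assumes w: "0 < w" "w \<le> 2" and p: "0 < p" "p < 1" and b: "0 < b" "b < 1"
  shows "mil_bsc w b p \<le> exp (w/2) - FF w b"
proof -
  obtain A where A: "sg A = p" using sg_surj p by blast
  obtain B where B: "sg B = b" using sg_surj b by blast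
  define H where "H = (\<lambda>X. cosh (X - w/2 * tanh X))"
  have nb: "sg (-B) = 1 - sg B" using sg_compl[of B] by simp
  have nb2: "1 - sg (-B) = sg B" using nb by simp
  have oT: "p*(1-b) + (1-p)*b = cosh (A - B) / (2 * cosh A * cosh B)"
    using out_sg(1)[of A B] unfolding A B .
  have qT: "p*(1-b) / (p*(1-b) + (1-p)*b) = sg (A - B)"
    using out_sg(2)[of A B] unfolding A B .
  have oF: "p*b + (1-p)*(1-b) = cosh (A + B) / (2 * cosh A * cosh B)"
    using out_sg(1)[of A "-B"] unfolding nb2 nb A B by (simp add: algebra_simps)
  have qF: "p*b / (p*b + (1-p)*(1-b)) = sg (A + B)"
    using out_sg(2)[of A "-B"] unfolding nb2 nb A B by (simp add: algebra_simps)
  have chp: "cosh A > 0" "cosh B > 0" "cosh (A+B) > 0" "cosh (A-B) > 0" by simp_all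
  have oTp: "p*(1-b) + (1-p)*b > 0" unfolding oT using chp by simp
  have oFp: "p*b + (1-p)*(1-b) > 0" unfolding oF using chp by simp
  have "CMIM w (bin_dist p) (bsc b) =
     cosh (A - B) / (2 * cosh A * cosh B) * (exp (w/2) * H (A - B) / cosh (A - B))
   + cosh (A + B) / (2 * cosh A * cosh B) * (exp (w/2) * H (A + B) / cosh (A + B))"
    unfolding CMIM_bin[OF oTp oFp] qT qF unfolding oT oF FF_sg H_def ..
  also have "\<dots> = exp (w/2) * (H (A - B) + H (A + B)) / (2 * cosh A * cosh B)"
    using chp by (simp add: field_simps)
  finally have C: "CMIM w (bin_dist p) (bsc b) = exp (w/2) * (H (A - B) + H (A + B)) / (2 * cosh A * cosh B)" .
  have M: "MIM w (bin_dist p) = exp (w/2) * H A / cosh A"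
    unfolding MIM_bin A[symmetric] FF_sg H_def ..
  have FB: "FF w b = exp (w/2) * H B / cosh B" unfolding B[symmetric] FF_sg H_def ..
  have E: "cosh A * cosh B - cosh A * H B - cosh B * H A + (H (A + B) + H (A - B)) / 2 \<ge> 0"
    unfolding H_def using E_nonneg[of "w/2" A B] w by simp
  have "exp (w/2) - FF w b - mil_bsc w b p
      = exp (w/2) * (cosh A * cosh B - cosh A * H B - cosh B * H A + (H (A + B) + H (A - B)) / 2)
        / (cosh A * cosh B)"
    unfolding mil_bsc_def C M FB using chp by (simp add: field_simps)
  also have "\<dots> \<ge> 0" using E chp by simp
  finally show ?thesis by simp
qed

lemma mil_le_FF:
  assumes w: "0 \<le> w" and p: "0 \<le> p" "p \<le> 1" and b: "0 \<le> b" "b \<le> 1"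
  shows "mil_bsc w b p \<le> FF w p - 1"
proof -
  have "CMIM w (bin_dist p) (bsc b) \<ge> 1"
  proof (rule CMIM_ge1)
    show "\<And>x. bin_dist p x \<ge> 0" using p by (simp add: bin_dist_def)
    show "sum (bin_dist p) UNIV = 1" by (simp add: bin_dist_def UNIV_bool)
    show "\<And>x y. bsc b x y \<ge> 0" using b by (simp add: bsc_def)
    show "\<And>x. (\<Sum>y\<in>UNIV. bsc b x y) = 1" by (simp add: bsc_def UNIV_bool)
  qed (rule w)
  then show ?thesis unfolding mil_bsc_def MIM_bin by simp
qed

theorem proposition1:
  fixes w b :: real
  assumes "0 < w" "w < 2" "0 \<le> b" "b \<le> 1"
  shows "(\<forall>p\<in>{0..1}. mil_bsc w b p \<le> mil_bsc w b (1/2))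
    \<and> (SUP p\<in>{0..1}. mil_bsc w b p) = mil_bsc w b (1/2)
    \<and> mil_bsc w b (1/2) = exp (w / 2) - (b * exp (w * (1 - b)) + (1 - b) * exp (w * b))"
proof -
  have half: "mil_bsc w b (1/2) = exp (w/2) - FF w b"
    unfolding half_val FF_def by simp
  have all: "\<forall>p\<in>{0..1}. mil_bsc w b p \<le> mil_bsc w b (1/2)"
  proof
    fix p :: real assume "p \<in> {0..1}"
    then have p: "0 \<le> p" "p \<le> 1" by auto
    have le: "mil_bsc w b p \<le> FF w p - 1" using mil_le_FF[of w p b] assms p by simp
    consider "0 < p" "p < 1" "0 < b" "b < 1" | "b = 0 \<or> b = 1" | "p = 0 \<or> p = 1"
      using p assms by linarith
    then show "mil_bsc w b p \<le> mil_bsc w b (1/2)"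
    proof cases
      case 1 then show ?thesis unfolding half using interior assms by simp
    next
      case 2
      then have "FF w b = 1" by (auto simp: FF_def)
      moreover have "FF w p \<le> exp (w/2)" using FF_le[of w p] assms p by simp
      ultimately show ?thesis unfolding half using le by simp
    next
      case 3
      then have "FF w p = 1" by (auto simp: FF_def)
      moreover have "FF w b \<le> exp (w/2)" using FF_le[of w b] assms by simp
      ultimately show ?thesis unfolding half using le by simp
    qed
  qed
  moreover have "(SUP p\<in>{0..1}. mil_bsc w b p) = mil_bsc w b (1/2)"
    by (rule cSup_eq_maximum) (use all in auto)
  ultimately show ?thesis using half_val by blast
qed

end
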